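(* If $P$ is a finite unit OC interval order, then $\dim(P) \le 3$.
   Context: Posets are finite and reflexive. A finite poset $P$ is a unit OC interval order if each element $x$ of $P$ can be assigned a real interval $I_x$ of length $1$ which is either open, $(a,a+1)$, or closed, $[a,a+1]$ (both types may occur in the same representation), such that for distinct $x,y$, $x<y$ in $P$ if and only if $I_x$ and $I_y$ are disjoint and every point of $I_x$ is less than every point of $I_y$. A realizer of $P$ is a set $\mathcal{R}$ of linear extensions of $P$ such that $x<y$ in $P$ if and only if $x<y$ in every $L \in \mathcal{R}$; the dimension $\dim(P)$ is the minimum cardinality of a realizer. *)

theory Defs
  imports Complex_Main
begin

definition poset_on :: "'a set \<Rightarrow> ('a \<Rightarrow> 'a \<Rightarrow> bool) \<Rightarrow> bool" where
  "poset_on A le \<longleftrightarrow>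
     (\<forall>x\<in>A. le x x) \<and>
     (\<forall>x\<in>A. \<forall>y\<in>A. le x y \<and> le y x \<longrightarrow> x = y) \<and>
     (\<forall>x\<in>A. \<forall>y\<in>A. \<forall>z\<in>A. le x y \<and> le y z \<longrightarrow> le x z)"

definition strict :: "('a \<Rightarrow> 'a \<Rightarrow> bool) \<Rightarrow> 'a \<Rightarrow> 'a \<Rightarrow> bool" where
  "strict le x y \<longleftrightarrow> le x y \<and> x \<noteq> y"

definition unit_oc_interval :: "bool \<Rightarrow> real \<Rightarrow> real set" where
  "unit_oc_interval c a = (if c then {a..a+1} else {a<..<a+1})"

definition unit_OC_interval_order :: "'a set \<Rightarrow> ('a \<Rightarrow> 'a \<Rightarrow> bool) \<Rightarrow> bool" where
  "unit_OC_interval_order A le \<longleftrightarrow>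
     (\<exists>(a :: 'a \<Rightarrow> real) (c :: 'a \<Rightarrow> bool).
        \<forall>x\<in>A. \<forall>y\<in>A. x \<noteq> y \<longrightarrow>
          (strict le x y \<longleftrightarrow>
             unit_oc_interval (c x) (a x) \<inter> unit_oc_interval (c y) (a y) = {} \<and>
             (\<forall>p\<in>unit_oc_interval (c x) (a x). \<forall>q\<in>unit_oc_interval (c y) (a y). p < q)))"

definition linear_extension :: "'a set \<Rightarrow> ('a \<Rightarrow> 'a \<Rightarrow> bool) \<Rightarrow> ('a \<Rightarrow> 'a \<Rightarrow> bool) \<Rightarrow> bool" where
  "linear_extension A le L \<longleftrightarrow>
     poset_on A L \<and> (\<forall>x\<in>A. \<forall>y\<in>A. L x y \<or> L y x) \<and>
     (\<forall>x\<in>A. \<forall>y\<in>A. le x y \<longrightarrow> L x y)"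

definition realizer :: "'a set \<Rightarrow> ('a \<Rightarrow> 'a \<Rightarrow> bool) \<Rightarrow> ('a \<Rightarrow> 'a \<Rightarrow> bool) set \<Rightarrow> bool" where
  "realizer A le R \<longleftrightarrow>
     (\<forall>L\<in>R. linear_extension A le L) \<and>
     (\<forall>x\<in>A. \<forall>y\<in>A. strict le x y \<longleftrightarrow> (\<forall>L\<in>R. strict L x y))"

definition order_dim :: "'a set \<Rightarrow> ('a \<Rightarrow> 'a \<Rightarrow> bool) \<Rightarrow> nat" where
  "order_dim A le = (LEAST n. \<exists>R. realizer A le R \<and> finite R \<and> card R = n)"

end

theory Submission
  imports Defs "HOL-Library.Product_Lexorder"
begin

lemma oc_mem_open: "a < p \<Longrightarrow> p < a + 1 \<Longrightarrow> p \<in> unit_oc_interval c a"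
  by (auto simp: unit_oc_interval_def)

lemma oc_mem_bounds: "p \<in> unit_oc_interval c a \<Longrightarrow> a \<le> p \<and> p \<le> a + 1"
  by (auto simp: unit_oc_interval_def split: if_splits)

lemma oc_mem_open_bounds: "\<not> c \<Longrightarrow> p \<in> unit_oc_interval c a \<Longrightarrow> a < p \<and> p < a + 1"
  by (auto simp: unit_oc_interval_def split: if_splits)

lemma iv_less:
  "(unit_oc_interval c1 a1 \<inter> unit_oc_interval c2 a2 = {} \<and>
    (\<forall>p\<in>unit_oc_interval c1 a1. \<forall>q\<in>unit_oc_interval c2 a2. p < q))
   \<longleftrightarrow> (a1 + 1 < a2 \<or> (a1 + 1 = a2 \<and> \<not> (c1 \<and> c2)))"
proof
  assume H: "unit_oc_interval c1 a1 \<inter> unit_oc_interval c2 a2 = {} \<and>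
    (\<forall>p\<in>unit_oc_interval c1 a1. \<forall>q\<in>unit_oc_interval c2 a2. p < q)"
  show "a1 + 1 < a2 \<or> (a1 + 1 = a2 \<and> \<not> (c1 \<and> c2))"
  proof (rule ccontr)
    assume N: "\<not> (a1 + 1 < a2 \<or> (a1 + 1 = a2 \<and> \<not> (c1 \<and> c2)))"
    then have "a2 < a1 + 1 \<or> (a1 + 1 = a2 \<and> c1 \<and> c2)" by auto
    then show False
    proof
      assume lt: "a2 < a1 + 1"
      define p where "p = (max a1 a2 + (a1 + 1)) / 2"
      define q where "q = (a2 + min p (a2 + 1)) / 2"
      have p1: "a1 < p" "p < a1 + 1" "a2 < p" using lt by (auto simp: p_def max_def)
      have q1: "a2 < q" "q < a2 + 1" "q < p" using p1 by (auto simp: q_def min_def)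
      have "p \<in> unit_oc_interval c1 a1" using p1 by (intro oc_mem_open) auto
      moreover have "q \<in> unit_oc_interval c2 a2" using q1 by (intro oc_mem_open) auto
      ultimately have "p < q" using H by blast
      then show False using q1 by auto
    next
      assume e: "a1 + 1 = a2 \<and> c1 \<and> c2"
      then have "a2 \<in> unit_oc_interval c1 a1" "a2 \<in> unit_oc_interval c2 a2"
        by (auto simp: unit_oc_interval_def)
      then show False using H by blast
    qed
  qed
next
  assume R: "a1 + 1 < a2 \<or> (a1 + 1 = a2 \<and> \<not> (c1 \<and> c2))"
  have lt: "\<forall>p\<in>unit_oc_interval c1 a1. \<forall>q\<in>unit_oc_interval c2 a2. p < q"
  proof (intro ballI)
    fix p q assume p: "p \<in> unit_oc_interval c1 a1" and q: "q \<in> unit_oc_interval c2 a2"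
    have pb: "a1 \<le> p \<and> p \<le> a1 + 1" using oc_mem_bounds[OF p] .
    have qb: "a2 \<le> q \<and> q \<le> a2 + 1" using oc_mem_bounds[OF q] .
    show "p < q"
    proof (cases "a1 + 1 < a2")
      case True then show ?thesis using pb qb by linarith
    next
      case False
      then have e: "a1 + 1 = a2" and nc: "\<not> (c1 \<and> c2)" using R by auto
      show ?thesis
      proof (cases c1)
        case True
        then have "\<not> c2" using nc by auto
        then show ?thesis using oc_mem_open_bounds[OF _ q] pb e by linarith
      next
        case False
        then show ?thesis using oc_mem_open_bounds[OF _ p] qb e by linarith
      qed
    qed
  qed
  then show "unit_oc_interval c1 a1 \<inter> unit_oc_interval c2 a2 = {} \<and>
    (\<forall>p\<in>unit_oc_interval c1 a1. \<forall>q\<in>unit_oc_interval c2 a2. p < q)"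
    by (metis disjoint_iff less_irrefl)
qed

definition PP :: "real \<Rightarrow> bool \<Rightarrow> real \<Rightarrow> bool \<Rightarrow> bool" where
  "PP a1 c1 a2 c2 \<longleftrightarrow> (a1 + 1 < a2 \<or> (a1 + 1 = a2 \<and> \<not> (c1 \<and> c2)))"

definition KA :: "real \<Rightarrow> nat \<Rightarrow> int \<times> real \<times> int" where
  "KA a i = (floor a, - a, - int i)"

definition rk :: "bool \<Rightarrow> bool \<Rightarrow> nat" where
  "rk lower c = (if lower then (if c then 2 else 0) else (if c then 1 else 3))"

definition KB :: "real \<Rightarrow> bool \<Rightarrow> nat \<Rightarrow> int \<times> real \<times> nat \<times> nat" where
  "KB a c i = (floor a div 2, a - of_int (floor a), rk (even (floor a)) c, i)"

definition KC :: "real \<Rightarrow> bool \<Rightarrow> nat \<Rightarrow> int \<times> real \<times> nat \<times> nat" where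
  "KC a c i = ((floor a + 1) div 2, a - of_int (floor a), rk (odd (floor a)) c, i)"

lemma floor_lt_of_P: "a1 + 1 \<le> a2 \<Longrightarrow> floor a1 < floor (a2::real)"
proof -
  assume "a1 + 1 \<le> a2"
  then have "floor (a1 + 1) \<le> floor a2" by (rule floor_mono)
  then show ?thesis by simp
qed

lemma KA_mono: "PP a1 c1 a2 c2 \<Longrightarrow> KA a1 i1 < KA a2 i2"
  using floor_lt_of_P[of a1 a2] by (auto simp: PP_def KA_def)

lemma KB_mono: assumes "PP a1 c1 a2 c2" shows "KB a1 c1 i1 < KB a2 c2 i2"
proof -
  have le: "a1 + 1 \<le> a2" using assms by (auto simp: PP_def)
  have fl: "floor a1 < floor a2" using floor_lt_of_P[OF le] .
  show ?thesis
  proof (cases "floor a1 div 2 < floor a2 div 2")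
    case True then show ?thesis by (simp add: KB_def)
  next
    case False
    then have e: "floor a1 div 2 = floor a2 div 2" using fl
      by (smt (verit) zdiv_mono1)
    then have f2: "floor a2 = floor a1 + 1" and ev: "even (floor a1)" using fl by presburger+
    have "floor a2 \<le> a2" "a2 < floor a2 + 1" "floor a1 \<le> a1" "a1 < floor a1 + 1"
      by linarith+
    then have fr: "a1 - of_int (floor a1) \<le> a2 - of_int (floor a2)" using f2 le by simp
    show ?thesis
    proof (cases "a1 - of_int (floor a1) < a2 - of_int (floor a2)")
      case True then show ?thesis using e by (simp add: KB_def)
    next
      case False
      then have eq: "a1 - of_int (floor a1) = a2 - of_int (floor a2)" using fr by simp
      then have "a2 = a1 + 1" using f2 by simp
      then have "\<not> (c1 \<and> c2)" using assms by (auto simp: PP_def)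
      then have "rk (even (floor a1)) c1 < rk (even (floor a2)) c2"
        using ev f2 by (auto simp: rk_def)
      then show ?thesis using e eq by (simp add: KB_def)
    qed
  qed
qed

lemma KC_mono: assumes "PP a1 c1 a2 c2" shows "KC a1 c1 i1 < KC a2 c2 i2"
proof -
  have le: "a1 + 1 \<le> a2" using assms by (auto simp: PP_def)
  have fl: "floor a1 < floor a2" using floor_lt_of_P[OF le] .
  show ?thesis
  proof (cases "(floor a1 + 1) div 2 < (floor a2 + 1) div 2")
    case True then show ?thesis by (simp add: KC_def)
  next
    case False
    then have e: "(floor a1 + 1) div 2 = (floor a2 + 1) div 2" using fl
      by (smt (verit) zdiv_mono1)
    then have f2: "floor a2 = floor a1 + 1" and ev: "odd (floor a1)" using fl by presburger+
    have "floor a2 \<le> a2" "a2 < floor a2 + 1" "floor a1 \<le> a1" "a1 < floor a1 + 1"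
      by linarith+
    then have fr: "a1 - of_int (floor a1) \<le> a2 - of_int (floor a2)" using f2 le by simp
    show ?thesis
    proof (cases "a1 - of_int (floor a1) < a2 - of_int (floor a2)")
      case True then show ?thesis using e by (simp add: KC_def)
    next
      case False
      then have eq: "a1 - of_int (floor a1) = a2 - of_int (floor a2)" using fr by simp
      then have "a2 = a1 + 1" using f2 by simp
      then have "\<not> (c1 \<and> c2)" using assms by (auto simp: PP_def)
      then have "rk (odd (floor a1)) c1 < rk (odd (floor a2)) c2"
        using ev f2 by (auto simp: rk_def)
      then show ?thesis using e eq by (simp add: KC_def)
    qed
  qed
qed


lemma incomp_aux:
  assumes le: "a1 \<le> a2" and np: "\<not> PP a1 c1 a2 c2" and ne: "i1 \<noteq> i2"
  shows "(KA a2 i2 < KA a1 i1 \<or> KB a2 c2 i2 < KB a1 c1 i1 \<or> KC a2 c2 i2 < KC a1 c1 i1) \<and>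
         (KA a1 i1 < KA a2 i2 \<or> KB a1 c1 i1 < KB a2 c2 i2 \<or> KC a1 c1 i1 < KC a2 c2 i2)"
proof -
  have lt: "a2 < a1 + 1 \<or> (a2 = a1 + 1 \<and> c1 \<and> c2)" using np by (auto simp: PP_def)
  have b: "floor a1 \<le> a1" "a1 < floor a1 + 1" "floor a2 \<le> a2" "a2 < floor a2 + 1"
    by linarith+
  have f12: "floor a1 \<le> floor a2" using le by (rule floor_mono)
  have f2: "floor a2 \<le> floor a1 + 1"
  proof -
    have "a2 \<le> a1 + 1" using lt by auto
    then have "floor a2 \<le> floor (a1 + 1)" by (rule floor_mono)
    then show ?thesis by simp
  qed
  show ?thesis
  proof (cases "floor a2 = floor a1")
    case same: True
    show ?thesis
    proof (cases "a1 = a2")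
      case eqa: True
      show ?thesis
      proof (cases "c1 = c2")
        case True
        then show ?thesis using eqa ne
          by (auto simp: KA_def KB_def KC_def)
      next
        case False
        then show ?thesis using eqa
          by (cases c1; cases "even (floor a1)") (auto simp: KA_def KB_def KC_def rk_def)
      qed
    next
      case False
      then have "a1 < a2" using le by simp
      then show ?thesis using same by (auto simp: KA_def KB_def)
    qed
  next
    case False
    then have f: "floor a2 = floor a1 + 1" using f12 f2 by simp
    have ka: "KA a1 i1 < KA a2 i2" using f by (simp add: KA_def)
    have fr: "a2 - of_int (floor a2) \<le> a1 - of_int (floor a1)" using f lt by auto
    have "KB a2 c2 i2 < KB a1 c1 i1 \<or> KC a2 c2 i2 < KC a1 c1 i1"
    proof (cases "a2 - of_int (floor a2) < a1 - of_int (floor a1)")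
      case True
      have "even (floor a1) \<or> odd (floor a1)" by simp
      then show ?thesis
      proof
        assume ev: "even (floor a1)"
        then have "floor a1 div 2 = floor a2 div 2" using f by presburger
        then show ?thesis using True by (simp add: KB_def)
      next
        assume od: "odd (floor a1)"
        then have "(floor a1 + 1) div 2 = (floor a2 + 1) div 2" using f by presburger
        then show ?thesis using True by (simp add: KC_def)
      qed
    next
      case False
      then have eq: "a2 - of_int (floor a2) = a1 - of_int (floor a1)" using fr by simp
      then have "a2 = a1 + 1" using f by simp
      then have cc: "c1" "c2" using lt by auto
      have "even (floor a1) \<or> odd (floor a1)" by simp
      then show ?thesis
      proof
        assume ev: "even (floor a1)"
        then have "floor a1 div 2 = floor a2 div 2" "odd (floor a2)" using f by presburger+
        then show ?thesis using eq ev cc by (simp add: KB_def rk_def)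
      next
        assume od: "odd (floor a1)"
        then have "(floor a1 + 1) div 2 = (floor a2 + 1) div 2" "even (floor a2)" using f by presburger+
        then show ?thesis using eq od cc by (simp add: KC_def rk_def)
      qed
    qed
    then show ?thesis using ka by auto
  qed
qed

lemma key_linext:
  fixes K :: "'a \<Rightarrow> 'k::linorder"
  assumes inj: "inj_on K A" and mono: "\<And>x y. x \<in> A \<Longrightarrow> y \<in> A \<Longrightarrow> strict le x y \<Longrightarrow> K x < K y"
  shows "linear_extension A le (\<lambda>x y. K x \<le> K y)"
  unfolding linear_extension_def poset_on_def
proof (intro conjI ballI impI)
  fix x y assume "x \<in> A" "y \<in> A" "K x \<le> K y \<and> K y \<le> K x"
  then show "x = y" using inj by (auto simp: inj_on_def)
next
  fix x y assume xy: "x \<in> A" "y \<in> A" "le x y"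
  show "K x \<le> K y"
  proof (cases "x = y")
    case False
    then have "strict le x y" using xy by (simp add: strict_def)
    then show ?thesis using mono xy by fastforce
  qed simp
qed auto

theorem theorem2:
  fixes A :: "'a set" and le :: "'a \<Rightarrow> 'a \<Rightarrow> bool"
  assumes "finite A" and "poset_on A le" and "unit_OC_interval_order A le"
  shows "order_dim A le \<le> 3"
proof -
  obtain a :: "'a \<Rightarrow> real" and c :: "'a \<Rightarrow> bool" where
    rep: "\<And>x y. x \<in> A \<Longrightarrow> y \<in> A \<Longrightarrow> x \<noteq> y \<Longrightarrow>
      strict le x y \<longleftrightarrow> PP (a x) (c x) (a y) (c y)"
    using assms(3) unfolding unit_OC_interval_order_def PP_def iv_less by blast
  obtain idf :: "'a \<Rightarrow> nat" where inj: "inj_on idf A"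
    using finite_imp_inj_to_nat_seg[OF assms(1)] by blast
  have sne: "strict le x y \<Longrightarrow> x \<noteq> y" for x y by (simp add: strict_def)
  define La where "La = (\<lambda>x y. KA (a x) (idf x) \<le> KA (a y) (idf y))"
  define Lb where "Lb = (\<lambda>x y. KB (a x) (c x) (idf x) \<le> KB (a y) (c y) (idf y))"
  define Lc where "Lc = (\<lambda>x y. KC (a x) (c x) (idf x) \<le> KC (a y) (c y) (idf y))"
  have ia: "inj_on (\<lambda>x. KA (a x) (idf x)) A" using inj by (auto simp: inj_on_def KA_def)
  have ib: "inj_on (\<lambda>x. KB (a x) (c x) (idf x)) A" using inj by (auto simp: inj_on_def KB_def)
  have ic: "inj_on (\<lambda>x. KC (a x) (c x) (idf x)) A" using inj by (auto simp: inj_on_def KC_def)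
  have lea: "linear_extension A le La" unfolding La_def
    by (rule key_linext[OF ia]) (metis rep sne KA_mono)
  have leb: "linear_extension A le Lb" unfolding Lb_def
    by (rule key_linext[OF ib]) (metis rep sne KB_mono)
  have lec: "linear_extension A le Lc" unfolding Lc_def
    by (rule key_linext[OF ic]) (metis rep sne KC_mono)
  define R where "R = {La, Lb, Lc}"
  have real: "realizer A le R"
    unfolding realizer_def
  proof (intro conjI ballI)
    fix L assume "L \<in> R" then show "linear_extension A le L" using lea leb lec R_def by auto
  next
    fix x y assume x: "x \<in> A" and y: "y \<in> A"
    show "strict le x y \<longleftrightarrow> (\<forall>L\<in>R. strict L x y)"
    proof
      assume s: "strict le x y"
      then have ne: "x \<noteq> y" by (rule sne)
      have p: "PP (a x) (c x) (a y) (c y)" using rep[OF x y ne] s by simp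
      show "\<forall>L\<in>R. strict L x y"
        using KA_mono[OF p, of "idf x" "idf y"] KB_mono[OF p, of "idf x" "idf y"]
          KC_mono[OF p, of "idf x" "idf y"] ne
        by (auto simp: R_def La_def Lb_def Lc_def strict_def less_imp_le)
    next
      assume all: "\<forall>L\<in>R. strict L x y"
      then have ne: "x \<noteq> y" by (auto simp: R_def strict_def)
      have A1: "KA (a x) (idf x) \<le> KA (a y) (idf y)" "KB (a x) (c x) (idf x) \<le> KB (a y) (c y) (idf y)"
        "KC (a x) (c x) (idf x) \<le> KC (a y) (c y) (idf y)"
        using all by (auto simp: R_def La_def Lb_def Lc_def strict_def)
      have nid: "idf x \<noteq> idf y" using inj x y ne by (auto simp: inj_on_def)
      show "strict le x y"
      proof (rule ccontr)
        assume ns: "\<not> strict le x y"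
        then have n1: "\<not> PP (a x) (c x) (a y) (c y)" using rep[OF x y ne] by simp
        show False
        proof (cases "PP (a y) (c y) (a x) (c x)")
          case True
          then show False using KA_mono[OF True, of "idf y" "idf x"] A1 by simp
        next
          case n2: False
          show False
          proof (cases "a x \<le> a y")
            case True
            from incomp_aux[OF True n1 nid] A1 show False by auto
          next
            case False
            then have "a y \<le> a x" by simp
            from incomp_aux[OF this n2 nid[symmetric]] A1 show False by auto
          qed
        qed
      qed
    qed
  qed
  have fin: "finite R" by (simp add: R_def)
  have c3: "card R \<le> 3" 
  proof -
    have "card {Lc} \<le> 1" by simp
    then have "card {Lb, Lc} \<le> 2" by (cases "Lb = Lc") auto
    moreover have "card {La, Lb, Lc} \<le> Suc (card {Lb, Lc})" by (simp add: card_insert_if)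
    ultimately have "card {La, Lb, Lc} \<le> 3" by linarith
    then show ?thesis by (simp add: R_def)
  qed
  have "order_dim A le \<le> card R"
    unfolding order_dim_def by (rule Least_le) (use real fin in blast)
  then show ?thesis using c3 by simp
qed

end
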